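(* Let $n\ge 3$ and let $\Delta^o(D_{2n})$ be the order super commuting graph of the dihedral group $D_{2n}$. (i) If $n$ is odd, the Sombor spectrum of $\Delta^o(D_{2n})$ consists of $-(n-1)\sqrt2$ with multiplicity $n-2$, $-n\sqrt2$ with multiplicity $n-1$, and the three roots (with multiplicity) of \[x\big(x-(n-1)(n-2)\sqrt2\big)\big(x-n(n-1)\sqrt2\big)-(n-1)(5n^2-6n+2)\big(x-n(n-1)\sqrt2\big)-n(5n^2-4n+1)\big(x-(n-1)(n-2)\sqrt2\big).\] (ii) If $n$ is even, the Sombor spectrum of $\Delta^o(D_{2n})$ consists of $-(2n-1)\sqrt2$ with multiplicity $2n-1$ and $(2n-1)^2\sqrt2$ with multiplicity $1$.
   Context: For a finite simple graph $\Gamma$ with vertices $u_1,\dots,u_N$, the Sombor matrix $S(\Gamma)$ has $(i,j)$ entry $\sqrt{\deg(u_i)^2+\deg(u_j)^2}$ if $u_i,u_j$ are adjacent and $0$ otherwise; the Sombor spectrum is the multiset of its eigenvalues. $D_{2n}=\langle a,b: a^n=b^2=e,\ ba=a^{-1}b\rangle$. The commuting graph $\Delta(G)$ has vertex set $G$, distinct $x,y$ adjacent iff $xy=yx$. The order super commuting graph $\Delta^o(G)$ has vertex set $G$, and distinct $g,h$ are adjacent iff $o(g)=o(h)$ or there exist $g',h'\in G$ with $o(g')=o(g)$, $o(h')=o(h)$ and $g'h'=h'g'$ (with $g'\neq h'$); here $o(x)$ is the order of $x$. *)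

theory Defs
  imports "HOL-Algebra.Multiplicative_Group" "Jordan_Normal_Form.Char_Poly"
begin

text \<open>Dihedral group D_{2n} = <a,b | a^n = b^2 = e, ba = a^{-1}b>, modelled concretely:
  the pair (k, s) with k < n stands for a^k b^s (s = True meaning b^1).
  (a^i b^s)(a^j b^t) = a^(i + (-1)^s j) b^(s+t).\<close>

definition dihedral_group :: "nat \<Rightarrow> (nat \<times> bool) monoid" where
  "dihedral_group n =
     \<lparr> carrier = {(k, s). k < n},
       monoid.mult = (\<lambda>(i, s) (j, t). ((if s then i + n - j else i + j) mod n, s \<noteq> t)),
       one = (0, False) \<rparr>"

definition osc_adj :: "('a, 'b) monoid_scheme \<Rightarrow> 'a \<Rightarrow> 'a \<Rightarrow> bool" where
  "osc_adj G g h \<longleftrightarrow> g \<in> carrier G \<and> h \<in> carrier G \<and> g \<noteq> h \<and>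
     (group.ord G g = group.ord G h \<or>
      (\<exists>g'\<in>carrier G. \<exists>h'\<in>carrier G. group.ord G g' = group.ord G g \<and>
          group.ord G h' = group.ord G h \<and> g' \<otimes>\<^bsub>G\<^esub> h' = h' \<otimes>\<^bsub>G\<^esub> g' \<and> g' \<noteq> h'))"

definition graph_deg :: "'a set \<Rightarrow> ('a \<Rightarrow> 'a \<Rightarrow> bool) \<Rightarrow> 'a \<Rightarrow> nat" where
  "graph_deg V E v = card {u \<in> V. E v u}"

definition sombor_matrix :: "'a set \<Rightarrow> ('a \<Rightarrow> 'a \<Rightarrow> bool) \<Rightarrow> 'a list \<Rightarrow> complex mat" where
  "sombor_matrix V E vs = mat (length vs) (length vs)
     (\<lambda>(i, j). if E (vs ! i) (vs ! j)
               then complex_of_real (sqrt (real (graph_deg V E (vs ! i)) ^ 2 + real (graph_deg V E (vs ! j)) ^ 2))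
               else 0)"

definition sombor_spectrum :: "'a set \<Rightarrow> ('a \<Rightarrow> 'a \<Rightarrow> bool) \<Rightarrow> 'a list \<Rightarrow> complex multiset" where
  "sombor_spectrum V E vs = proots (char_poly (sombor_matrix V E vs))"

end

theory Submission
  imports Defs
begin



lemma dih_carrier: "carrier (dihedral_group n) = {(k, s). k < n}"
  by (simp add: dihedral_group_def)
lemma dih_one: "\<one>\<^bsub>dihedral_group n\<^esub> = (0, False)"
  by (simp add: dihedral_group_def)
lemma dih_mult: "(i, s) \<otimes>\<^bsub>dihedral_group n\<^esub> (j, t) =
   ((if s then i + n - j else i + j) mod n, s \<noteq> t)"
  by (simp add: dihedral_group_def)

definition sg :: "bool \<Rightarrow> int" where "sg s = (if s then -1 else 1)"

lemma dih_fst: assumes "j < n"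
  shows "int ((if s then i + n - j else i + j) mod n) = (int i + sg s * int j) mod int n"
proof (cases s)
  case True
  have "int (i + n - j) = (int i - int j) + int n" using assms by simp
  then show ?thesis using True by (simp add: of_nat_mod sg_def)
next
  case False
  then show ?thesis by (simp add: of_nat_mod sg_def)
qed

lemma sg_neq: "sg (s \<noteq> t) = sg s * sg t" by (simp add: sg_def)

lemma dihedral_group: assumes "n \<ge> 1" shows "group (dihedral_group n)"
proof (rule groupI)
  fix x y assume "x \<in> carrier (dihedral_group n)" "y \<in> carrier (dihedral_group n)"
  then show "x \<otimes>\<^bsub>dihedral_group n\<^esub> y \<in> carrier (dihedral_group n)"
    using assms by (cases x; cases y) (auto simp: dih_carrier dih_mult)
next
  show "\<one>\<^bsub>dihedral_group n\<^esub> \<in> carrier (dihedral_group n)"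
    using assms by (simp add: dih_carrier dih_one)
next
  fix x assume "x \<in> carrier (dihedral_group n)"
  then show "\<one>\<^bsub>dihedral_group n\<^esub> \<otimes>\<^bsub>dihedral_group n\<^esub> x = x"
    by (cases x) (auto simp: dih_carrier dih_mult dih_one)
next
  fix x assume x: "x \<in> carrier (dihedral_group n)"
  obtain i s where xi: "x = (i, s)" and i: "i < n" using x by (cases x) (auto simp: dih_carrier)
  show "\<exists>y\<in>carrier (dihedral_group n). y \<otimes>\<^bsub>dihedral_group n\<^esub> x = \<one>\<^bsub>dihedral_group n\<^esub>"
  proof (cases s)
    case True
    then show ?thesis using i by (intro bexI[of _ "(i, True)"]) (auto simp: dih_carrier dih_mult dih_one xi)
  next
    case False
    show ?thesis
    proof (intro bexI[of _ "((n - i) mod n, False)"])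
      have "(n - i) mod n + i = n \<or> i = 0" using i by (cases "i = 0") auto
      then show "((n - i) mod n, False) \<otimes>\<^bsub>dihedral_group n\<^esub> x = \<one>\<^bsub>dihedral_group n\<^esub>"
        using False i by (auto simp: dih_mult dih_one xi)
    qed (use assms in \<open>auto simp: dih_carrier\<close>)
  qed
next
  fix x y z assume x: "x \<in> carrier (dihedral_group n)" and y: "y \<in> carrier (dihedral_group n)"
    and z: "z \<in> carrier (dihedral_group n)"
  obtain i s where xi: "x = (i, s)" and i: "i < n" using x by (cases x) (auto simp: dih_carrier)
  obtain j t where yj: "y = (j, t)" and j: "j < n" using y by (cases y) (auto simp: dih_carrier)
  obtain k u where zk: "z = (k, u)" and k: "k < n" using z by (cases z) (auto simp: dih_carrier)
  define a where "a = (if s then i + n - j else i + j) mod n"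
  define b where "b = (if t then j + n - k else j + k) mod n"
  have an: "a < n" "b < n" using assms by (auto simp: a_def b_def)
  have "int ((if s \<noteq> t then a + n - k else a + k) mod n) = (int a + sg (s \<noteq> t) * int k) mod int n"
    by (rule dih_fst[OF k])
  also have "\<dots> = ((int i + sg s * int j) mod int n + sg (s \<noteq> t) * int k) mod int n"
    unfolding a_def dih_fst[OF j] ..
  also have "\<dots> = (int i + sg s * int j + sg s * sg t * int k) mod int n"
    unfolding sg_neq by (simp add: mod_add_left_eq)
  also have "\<dots> = (int i + sg s * ((int j + sg t * int k) mod int n)) mod int n"
    by (metis (no_types, opaque_lifting) distrib_left mod_add_right_eq mod_mult_right_eq mult.assoc add.assoc)
  also have "\<dots> = int ((if s then i + n - b else i + b) mod n)"
  proof -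
    have 1: "int ((if s then i + n - b else i + b) mod n) = (int i + sg s * int b) mod int n"
      by (rule dih_fst[OF an(2)])
    have 2: "int b = (int j + sg t * int k) mod int n" unfolding b_def by (rule dih_fst[OF k])
    show ?thesis unfolding 1 2 ..
  qed
  finally have eq: "(if s \<noteq> t then a + n - k else a + k) mod n = (if s then i + n - b else i + b) mod n"
    by linarith
  have xy: "x \<otimes>\<^bsub>dihedral_group n\<^esub> y = (a, s \<noteq> t)" by (simp add: xi yj dih_mult a_def)
  have yz: "y \<otimes>\<^bsub>dihedral_group n\<^esub> z = (b, t \<noteq> u)" by (simp add: zk yj dih_mult b_def)
  show "x \<otimes>\<^bsub>dihedral_group n\<^esub> y \<otimes>\<^bsub>dihedral_group n\<^esub> z = x \<otimes>\<^bsub>dihedral_group n\<^esub> (y \<otimes>\<^bsub>dihedral_group n\<^esub> z)"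
    unfolding xy yz unfolding xi zk dih_mult using eq by auto
qed

lemma (in group) pow2_eq: "x \<in> carrier G \<Longrightarrow> x [^] (2::nat) = x \<otimes> x"
  by (simp add: numeral_2_eq_2)

lemma (in group) ord_eq_2I: "x \<in> carrier G \<Longrightarrow> x \<noteq> \<one> \<Longrightarrow> x \<otimes> x = \<one> \<Longrightarrow> ord x = 2"
proof -
  assume x: "x \<in> carrier G" and "x \<noteq> \<one>" "x \<otimes> x = \<one>"
  then have "ord x dvd 2" "ord x \<noteq> 1" using pow_eq_id[OF x, of 2] pow2_eq[OF x] ord_eq_1[OF x] by auto
  then show "ord x = 2"
  proof -
    have "ord x \<noteq> 0" using \<open>ord x dvd 2\<close> by (intro notI) simp
    moreover have "ord x \<le> 2" using \<open>ord x dvd 2\<close> by (rule dvd_imp_le) simp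
    ultimately show ?thesis using \<open>ord x \<noteq> 1\<close> by linarith
  qed
qed

lemma (in group) ord_neq_2I: "x \<in> carrier G \<Longrightarrow> x \<otimes> x \<noteq> \<one> \<Longrightarrow> ord x \<noteq> 2"
proof
  assume x: "x \<in> carrier G" and ne: "x \<otimes> x \<noteq> \<one>" and o: "ord x = 2"
  have "x [^] ord x = \<one>" using pow_ord_eq_1[OF x] .
  then have "x [^] (2::nat) = \<one>" by (simp only: o)
  then show False using pow2_eq[OF x] ne by simp
qed

lemma dih_refl_ord:
  assumes n: "n \<ge> 1" and i: "i < n"
  shows "group.ord (dihedral_group n) (i, True) = 2"
proof -
  interpret group "dihedral_group n" by (rule dihedral_group[OF n])
  show ?thesis
    by (rule ord_eq_2I) (use i in \<open>auto simp: dih_carrier dih_one dih_mult\<close>)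
qed

lemma dih_one_ord:
  assumes n: "n \<ge> 1"
  shows "group.ord (dihedral_group n) (0, False) = 1"
proof -
  interpret group "dihedral_group n" by (rule dihedral_group[OF n])
  show ?thesis using ord_id unfolding dih_one .
qed

lemma dih_ord_1_iff:
  assumes n: "n \<ge> 1" and "x \<in> carrier (dihedral_group n)"
  shows "group.ord (dihedral_group n) x = 1 \<longleftrightarrow> x = (0, False)"
proof -
  interpret group "dihedral_group n" by (rule dihedral_group[OF n])
  show ?thesis using ord_eq_1[OF assms(2)] unfolding dih_one .
qed

lemma odd_rot_sq:
  fixes n i :: nat
  assumes "odd n" "i < n" "i \<noteq> 0"
  shows "(i + i) mod n \<noteq> 0"
proof
  assume "(i + i) mod n = 0"
  then have "n dvd 2 * i" by (simp add: mult_2 dvd_eq_mod_eq_0)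
  then obtain k where k: "2 * i = n * k" by (auto elim: dvdE)
  then have "even (n * k)" unfolding k[symmetric] by simp
  then have "even k" using assms(1) by simp
  then obtain m where "k = 2 * m" by (auto elim: evenE)
  then have "i = n * m" using k by simp
  then have "n dvd i" by simp
  then show False using assms by (auto dest: dvd_imp_le)
qed

lemma dih_rot_ord_odd:
  assumes n: "n \<ge> 1" "odd n" and i: "i < n" "i \<noteq> 0"
  shows "group.ord (dihedral_group n) (i, False) \<noteq> 2"
proof -
  interpret group "dihedral_group n" by (rule dihedral_group[OF n(1)])
  show ?thesis
    by (rule ord_neq_2I) (use i odd_rot_sq[OF n(2) i] in \<open>auto simp: dih_carrier dih_one dih_mult\<close>)
qed

lemma odd_rot_refl_comm:
  fixes n i j :: nat
  assumes "odd n" "i < n" "i \<noteq> 0" "j < n"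
  shows "(i + j) mod n \<noteq> (j + n - i) mod n"
proof
  assume h: "(i + j) mod n = (j + n - i) mod n"
  have e1: "int ((i + j) mod n) = (int i + int j) mod int n" by (simp only: of_nat_mod of_nat_add)
  have d: "int (j + n - i) = (int j - int i) + int n" using assms by simp
  have e2: "int ((j + n - i) mod n) = (int j - int i) mod int n"
    by (simp only: of_nat_mod d mod_add_self2)
  have "(int i + int j) mod int n = (int j - int i) mod int n" unfolding e1[symmetric] e2[symmetric] h ..
  then have "int n dvd (int i + int j) - (int j - int i)" by (simp only: mod_eq_dvd_iff)
  then have "int n dvd int (2 * i)" by simp
  then have "n dvd 2 * i" by (simp only: of_nat_dvd_iff)
  then have "(i + i) mod n = 0" by (simp add: mult_2 dvd_eq_mod_eq_0)
  then show False using odd_rot_sq[OF assms(1,2,3)] by simp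
qed

lemma odd_no_comm:
  assumes "odd n" "i < n" "i \<noteq> 0" "j < n"
  shows "(i, False) \<otimes>\<^bsub>dihedral_group n\<^esub> (j, True) \<noteq> (j, True) \<otimes>\<^bsub>dihedral_group n\<^esub> (i, False)"
  using odd_rot_refl_comm[OF assms] by (simp add: dih_mult)

lemma odd_ord2_iff:
  assumes n: "n \<ge> 1" "odd n" and x: "x \<in> carrier (dihedral_group n)"
  shows "group.ord (dihedral_group n) x = 2 \<longleftrightarrow> snd x"
proof -
  obtain i s where xi: "x = (i, s)" and i: "i < n" using x by (cases x) (auto simp: dih_carrier)
  show ?thesis
  proof (cases s)
    case True then show ?thesis using dih_refl_ord[OF n(1) i] xi by simp
  next
    case False
    show ?thesis
    proof (cases "i = 0")
      case True then show ?thesis using dih_one_ord[OF n(1)] xi False by simp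
    next
      case f: False then show ?thesis using dih_rot_ord_odd[OF n i f] xi False by simp
    qed
  qed
qed

lemma rot_comm: "(i, False) \<otimes>\<^bsub>dihedral_group n\<^esub> (j, False) = (j, False) \<otimes>\<^bsub>dihedral_group n\<^esub> (i, False)"
  by (simp add: dih_mult add.commute)

lemma osc_odd:
  assumes n: "n \<ge> 3" "odd n" and g: "g \<in> carrier (dihedral_group n)" and h: "h \<in> carrier (dihedral_group n)"
  shows "osc_adj (dihedral_group n) g h \<longleftrightarrow> g \<noteq> h \<and> (g = (0, False) \<or> h = (0, False) \<or> snd g = snd h)"
proof -
  have n1: "n \<ge> 1" using n by simp
  interpret group "dihedral_group n" by (rule dihedral_group[OF n1])
  have o2: "\<And>x. x \<in> carrier (dihedral_group n) \<Longrightarrow> ord x = 2 \<longleftrightarrow> snd x"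
    using odd_ord2_iff[OF n1 n(2)] by blast
  have o1: "\<And>x. x \<in> carrier (dihedral_group n) \<Longrightarrow> ord x = 1 \<longleftrightarrow> x = (0, False)"
    using dih_ord_1_iff[OF n1] by blast
  have one: "\<one>\<^bsub>dihedral_group n\<^esub> = (0, False)" by (rule dih_one)
  obtain i s where gi: "g = (i, s)" and i: "i < n" using g by (cases g) (auto simp: dih_carrier)
  obtain j t where hj: "h = (j, t)" and j: "j < n" using h by (cases h) (auto simp: dih_carrier)
  have noadj: False if rot: "x = (a, False)" "a \<noteq> 0" "a < n" and refl: "y = (b, True)" "b < n"
     and x': "x' \<in> carrier (dihedral_group n)" "ord x' = ord x"
     and y': "y' \<in> carrier (dihedral_group n)" "ord y' = ord y"
     and c: "x' \<otimes>\<^bsub>dihedral_group n\<^esub> y' = y' \<otimes>\<^bsub>dihedral_group n\<^esub> x'" for x y x' y' a b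
  proof -
    have xc: "x \<in> carrier (dihedral_group n)" "y \<in> carrier (dihedral_group n)"
      using rot refl by (auto simp: dih_carrier)
    have "ord y = 2" using o2[OF xc(2)] refl by simp
    then have sy: "snd y'" using o2[OF y'(1)] y'(2) by simp
    have "ord x \<noteq> 2" "ord x \<noteq> 1" using o2[OF xc(1)] o1[OF xc(1)] rot by auto
    then have sx: "\<not> snd x'" "x' \<noteq> (0, False)" using o2[OF x'(1)] o1[OF x'(1)] x'(2) by auto
    obtain a' where a': "x' = (a', False)" "a' < n" "a' \<noteq> 0" using x'(1) sx by (cases x') (auto simp: dih_carrier)
    obtain b' where b': "y' = (b', True)" "b' < n" using y'(1) sy by (cases y') (auto simp: dih_carrier)
    show False using odd_no_comm[OF n(2) a'(2,3) b'(2)] c a'(1) b'(1) by simp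
  qed
  show ?thesis
  proof
    assume adj: "osc_adj (dihedral_group n) g h"
    then have ne: "g \<noteq> h" by (simp add: osc_adj_def)
    show "g \<noteq> h \<and> (g = (0, False) \<or> h = (0, False) \<or> snd g = snd h)"
    proof (rule ccontr)
      assume "\<not> ?thesis"
      then have c: "g \<noteq> (0, False)" "h \<noteq> (0, False)" "s \<noteq> t" using ne gi hj by auto
      have "ord g \<noteq> ord h"
      proof (cases s)
        case True
        then have "ord g = 2" "ord h \<noteq> 2" using o2 g h gi hj c by auto
        then show ?thesis by simp
      next
        case False
        then have "ord h = 2" "ord g \<noteq> 2" using o2 g h gi hj c by auto
        then show ?thesis by simp
      qed
      then obtain g' h' where gh': "g' \<in> carrier (dihedral_group n)" "h' \<in> carrier (dihedral_group n)"
        "ord g' = ord g" "ord h' = ord h" "g' \<otimes>\<^bsub>dihedral_group n\<^esub> h' = h' \<otimes>\<^bsub>dihedral_group n\<^esub> g'"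
        using adj unfolding osc_adj_def by blast
      show False
      proof (cases s)
        case True
        then have "t = False" "j \<noteq> 0" using c hj by auto
        then show False using noadj[OF _ _ j _ i gh'(2,4) gh'(1,3) gh'(5)[symmetric]] hj gi True by simp
      next
        case False
        then have "t = True" "i \<noteq> 0" using c gi by auto
        then show False using noadj[OF _ _ i _ j gh'(1,3) gh'(2,4) gh'(5)] hj gi False by simp
      qed
    qed
  next
    assume r: "g \<noteq> h \<and> (g = (0, False) \<or> h = (0, False) \<or> snd g = snd h)"
    have comm: "g \<otimes>\<^bsub>dihedral_group n\<^esub> h = h \<otimes>\<^bsub>dihedral_group n\<^esub> g \<or> ord g = ord h"
    proof -
      consider "g = (0, False)" | "h = (0, False)" | "s = t" using r gi hj by auto
      then show ?thesis
      proof cases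
        case 1 then show ?thesis using l_one[OF h] r_one[OF h] unfolding one by simp
      next
        case 2 then show ?thesis using l_one[OF g] r_one[OF g] unfolding one by simp
      next
        case 3
        show ?thesis
        proof (cases s)
          case True
          then have "ord g = 2" "ord h = 2" using o2[OF g] o2[OF h] gi hj 3 by auto
          then show ?thesis by simp
        next
          case False
          then show ?thesis using rot_comm gi hj 3 by simp
        qed
      qed
    qed
    then show "osc_adj (dihedral_group n) g h"
      unfolding osc_adj_def using g h r by blast
  qed
qed

lemma osc_even:
  assumes n: "n \<ge> 3" "even n" and g: "g \<in> carrier (dihedral_group n)" and h: "h \<in> carrier (dihedral_group n)"
  shows "osc_adj (dihedral_group n) g h \<longleftrightarrow> g \<noteq> h"
proof -
  have n1: "n \<ge> 1" using n by simp
  interpret group "dihedral_group n" by (rule dihedral_group[OF n1])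
  have hc: "(n div 2, False) \<in> carrier (dihedral_group n)" using n by (auto simp: dih_carrier)
  have hh: "n div 2 + n div 2 = n" using n(2) by auto
  have oh: "ord (n div 2, False) = 2"
    by (rule ord_eq_2I[OF hc]) (use n hh in \<open>auto simp: dih_one dih_mult\<close>)
  define \<rho> where "\<rho> x = (if snd x then (n div 2, False) else x)" for x :: "nat \<times> bool"
  have \<rho>: "\<rho> x \<in> carrier (dihedral_group n) \<and> ord (\<rho> x) = ord x \<and> \<not> snd (\<rho> x)"
    if x: "x \<in> carrier (dihedral_group n)" for x
  proof (cases "snd x")
    case True
    obtain i where "x = (i, True)" "i < n" using x True by (cases x) (auto simp: dih_carrier)
    then show ?thesis using True hc oh dih_refl_ord[OF n1] by (simp add: \<rho>_def)
  next
    case False then show ?thesis using x by (simp add: \<rho>_def)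
  qed
  show ?thesis
  proof
    assume "osc_adj (dihedral_group n) g h" then show "g \<noteq> h" by (simp add: osc_adj_def)
  next
    assume ne: "g \<noteq> h"
    show "osc_adj (dihedral_group n) g h"
    proof (cases "ord g = ord h")
      case True then show ?thesis using ne g h by (simp add: osc_adj_def)
    next
      case False
      obtain a where a: "\<rho> g = (a, False)" using \<rho>[OF g] by (cases "\<rho> g") auto
      obtain b where b: "\<rho> h = (b, False)" using \<rho>[OF h] by (cases "\<rho> h") auto
      have "\<rho> g \<otimes>\<^bsub>dihedral_group n\<^esub> \<rho> h = \<rho> h \<otimes>\<^bsub>dihedral_group n\<^esub> \<rho> g"
        unfolding a b by (rule rot_comm)
      moreover have "\<rho> g \<noteq> \<rho> h" using False \<rho>[OF g] \<rho>[OF h] by metis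
      ultimately show ?thesis unfolding osc_adj_def using g h ne \<rho>[OF g] \<rho>[OF h] by blast
    qed
  qed
qed



lemma mult_mat_entry:
  fixes a b :: "nat \<times> nat \<Rightarrow> 'a :: comm_ring_1"
  assumes "i < N" "j < N"
  shows "(mat N N a * mat N N b) $$ (i, j) = (\<Sum>l<N. a (i, l) * b (l, j))"
  using assms by (simp add: scalar_prod_def lessThan_atLeast0)

lemma sum_spike: "(k::nat) < N \<Longrightarrow> (\<Sum>l<N. if l = k then c else 0) = (c :: 'a :: comm_monoid_add)"
proof -
  assume "k < N"
  have "(\<Sum>l\<in>{..<N}. if l = k then c else 0) = (if k \<in> {..<N} then c else 0)"
    by (rule sum.delta) simp
  then show ?thesis using \<open>k < N\<close> by simp
qed

definition cls :: "nat \<Rightarrow> nat \<Rightarrow> nat" where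
  "cls r i = (if i < 3 then i else if i < 3 + r then 1 else 2)"

lemma cls_lt: "cls r i < 3" by (simp add: cls_def)

definition xx :: "nat \<Rightarrow> nat \<Rightarrow> nat \<Rightarrow> complex" where
  "xx r i j = (if 3 \<le> j \<and> i = cls r j then 1 else 0)"

definition dd :: "nat \<Rightarrow> nat \<Rightarrow> complex" where
  "dd i j = (if i = j then 1 else 0)"

definition Pm :: "nat \<Rightarrow> nat \<Rightarrow> complex mat" where
  "Pm r N = mat N N (\<lambda>(i, j). dd i j - xx r i j)"
definition Qm :: "nat \<Rightarrow> nat \<Rightarrow> complex mat" where
  "Qm r N = mat N N (\<lambda>(i, j). dd i j + xx r i j)"

lemma PQ: "Pm r N * Qm r N = 1\<^sub>m N"
proof (rule eq_matI)
  fix i j assume ij: "i < dim_row (1\<^sub>m N :: complex mat)" "j < dim_col (1\<^sub>m N :: complex mat)"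
  then have i: "i < N" and j: "j < N" by auto
  have s: "(dd i l - xx r i l) * (dd l j + xx r l j) =
     (if l = i then dd i j + xx r i j else 0) - (if l = j then xx r i j else 0)" for l
    using cls_lt[of r j] cls_lt[of r l] cls_lt[of r i] by (auto simp: dd_def xx_def)
  have "(Pm r N * Qm r N) $$ (i, j) = (\<Sum>l<N. (dd i l - xx r i l) * (dd l j + xx r l j))"
    unfolding Pm_def Qm_def by (simp add: mult_mat_entry[OF i j])
  also have "\<dots> = dd i j"
    unfolding s sum_subtractf sum_spike[OF i] sum_spike[OF j] by simp
  finally show "(Pm r N * Qm r N) $$ (i, j) = 1\<^sub>m N $$ (i, j)" using i j by (simp add: dd_def)
qed (auto simp: Pm_def Qm_def)

lemma QP: "Qm r N * Pm r N = 1\<^sub>m N"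
proof (rule eq_matI)
  fix i j assume ij: "i < dim_row (1\<^sub>m N :: complex mat)" "j < dim_col (1\<^sub>m N :: complex mat)"
  then have i: "i < N" and j: "j < N" by auto
  have s: "(dd i l + xx r i l) * (dd l j - xx r l j) =
     (if l = i then dd i j - xx r i j else 0) + (if l = j then xx r i j else 0)" for l
    using cls_lt[of r j] cls_lt[of r l] cls_lt[of r i] by (auto simp: dd_def xx_def)
  have "(Qm r N * Pm r N) $$ (i, j) = (\<Sum>l<N. (dd i l + xx r i l) * (dd l j - xx r l j))"
    unfolding Pm_def Qm_def by (simp add: mult_mat_entry[OF i j])
  also have "\<dots> = dd i j"
    unfolding s sum.distrib sum_spike[OF i] sum_spike[OF j] by simp
  finally show "(Qm r N * Pm r N) $$ (i, j) = 1\<^sub>m N $$ (i, j)" using i j by (simp add: dd_def)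
qed (auto simp: Pm_def Qm_def)

definition Tf :: "nat \<Rightarrow> nat \<Rightarrow> (nat \<Rightarrow> nat \<Rightarrow> complex) \<Rightarrow> nat \<Rightarrow> nat \<Rightarrow> complex" where
  "Tf r f w i j = (if 3 \<le> j then (if i = j then - w (cls r j) (cls r j) else 0)
     else if 3 \<le> i then w (cls r i) j
     else w i j * (of_nat (if i = 0 then 1 else if i = 1 then r + 1 else f + 1) - dd i j))"

definition Zf :: "nat \<Rightarrow> nat \<Rightarrow> (nat \<Rightarrow> nat \<Rightarrow> complex) \<Rightarrow> nat \<Rightarrow> nat \<Rightarrow> complex" where
  "Zf r f w i j = (if i = 1 then (if j < 3 then of_nat r * w 1 j else if j < 3 + r then - w 1 1 else 0)
     else if i = 2 then (if j < 3 then of_nat f * w 2 j else if 3 + r \<le> j then - w 2 2 else 0) else 0)"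

lemma sum_const_on: "(\<And>l. l \<in> A \<Longrightarrow> g l = c) \<Longrightarrow> sum g A = of_nat (card A) * (c :: complex)"
  by (simp add: sum.cong[of A A g "\<lambda>_. c"])

lemma Z_sum:
  assumes j: "j < 3 + r + f"
  shows "(\<Sum>l<3 + r + f. xx r i l * Tf r f w l j) = Zf r f w i j"
proof -
  define A where "A = {l \<in> {..<3 + r + f}. 3 \<le> l \<and> i = cls r l}"
  have "(\<Sum>l<3 + r + f. xx r i l * Tf r f w l j) = (\<Sum>l<3 + r + f. if 3 \<le> l \<and> i = cls r l then Tf r f w l j else 0)"
    by (rule sum.cong) (auto simp: xx_def)
  also have "\<dots> = sum (\<lambda>l. Tf r f w l j) A"
    unfolding A_def by (rule sum.inter_filter[symmetric]) simp
  finally have eq: "(\<Sum>l<3 + r + f. xx r i l * Tf r f w l j) = sum (\<lambda>l. Tf r f w l j) A" .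
  have A: "A = (if i = 1 then {3..<3 + r} else if i = 2 then {3 + r..<3 + r + f} else {})"
    unfolding A_def by (auto simp: cls_def)
  show ?thesis
  proof (cases "j < 3")
    case True
    have "sum (\<lambda>l. Tf r f w l j) A = of_nat (card A) * (if i = 1 then w 1 j else w 2 j)"
      by (rule sum_const_on) (use True in \<open>auto simp: A Tf_def cls_def split: if_splits\<close>)
    then show ?thesis using True eq by (simp add: A Zf_def)
  next
    case False
    have "sum (\<lambda>l. Tf r f w l j) A = sum (\<lambda>l. if l = j then - w (cls r j) (cls r j) else 0) A"
      by (rule sum.cong) (use False in \<open>auto simp: Tf_def\<close>)
    also have "\<dots> = (if j \<in> A then - w (cls r j) (cls r j) else 0)"
      by (rule sum.delta) (simp add: A)
    finally show ?thesis using False eq j by (auto simp: A Zf_def cls_def)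
  qed
qed

definition Sf :: "nat \<Rightarrow> (nat \<Rightarrow> nat \<Rightarrow> complex) \<Rightarrow> nat \<Rightarrow> nat \<Rightarrow> complex" where
  "Sf r w i j = (if i = j then 0 else w (cls r i) (cls r j))"

definition Sm :: "nat \<Rightarrow> nat \<Rightarrow> (nat \<Rightarrow> nat \<Rightarrow> complex) \<Rightarrow> complex mat" where
  "Sm r f w = mat (3 + r + f) (3 + r + f) (\<lambda>(i, j). Sf r w i j)"
definition Tm :: "nat \<Rightarrow> nat \<Rightarrow> (nat \<Rightarrow> nat \<Rightarrow> complex) \<Rightarrow> complex mat" where
  "Tm r f w = mat (3 + r + f) (3 + r + f) (\<lambda>(i, j). Tf r f w i j)"

lemma final_entry:
  assumes "i < 3 + r + f" "j < 3 + r + f"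
  shows "Sf r w i j - (if 3 \<le> j then Sf r w i (cls r j) else 0) = Tf r f w i j - Zf r f w i j"
  using assms by (auto simp: Sf_def Tf_def Zf_def cls_def dd_def algebra_simps)

lemma SP_PT: "Sm r f w * Pm r (3 + r + f) = Pm r (3 + r + f) * Tm r f w"
proof (rule eq_matI)
  let ?N = "3 + r + f"
  fix i j assume ij: "i < dim_row (Pm r ?N * Tm r f w)" "j < dim_col (Pm r ?N * Tm r f w)"
  then have i: "i < ?N" and j: "j < ?N" by (auto simp: Pm_def Tm_def)
  have cj: "cls r j < ?N" using cls_lt[of r j] by simp
  have s1: "Sf r w i l * (dd l j - xx r l j) =
     (if l = j then Sf r w i j else 0) - (if l = cls r j then (if 3 \<le> j then Sf r w i (cls r j) else 0) else 0)" for l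
    by (auto simp: dd_def xx_def)
  have "(Sm r f w * Pm r ?N) $$ (i, j) = (\<Sum>l<?N. Sf r w i l * (dd l j - xx r l j))"
    unfolding Sm_def Pm_def by (simp add: mult_mat_entry[OF i j])
  also have "\<dots> = Sf r w i j - (if 3 \<le> j then Sf r w i (cls r j) else 0)"
    unfolding s1 sum_subtractf sum_spike[OF j] sum_spike[OF cj] ..
  finally have l: "(Sm r f w * Pm r ?N) $$ (i, j) = Sf r w i j - (if 3 \<le> j then Sf r w i (cls r j) else 0)" .
  have s2: "(dd i l - xx r i l) * Tf r f w l j = (if l = i then Tf r f w i j else 0) - xx r i l * Tf r f w l j" for l
    by (auto simp: dd_def algebra_simps)
  have "(Pm r ?N * Tm r f w) $$ (i, j) = (\<Sum>l<?N. (dd i l - xx r i l) * Tf r f w l j)"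
    unfolding Tm_def Pm_def by (simp add: mult_mat_entry[OF i j])
  also have "\<dots> = Tf r f w i j - Zf r f w i j"
    unfolding s2 sum_subtractf sum_spike[OF i] Z_sum[OF j] ..
  finally show "(Sm r f w * Pm r ?N) $$ (i, j) = (Pm r ?N * Tm r f w) $$ (i, j)"
    using l final_entry[OF i j] by simp
qed (auto simp: Pm_def Tm_def Sm_def)

lemma similar_S_T: "similar_mat (Sm r f w) (Tm r f w)"
proof -
  let ?N = "3 + r + f"
  have c: "Sm r f w \<in> carrier_mat ?N ?N" "Tm r f w \<in> carrier_mat ?N ?N"
    "Pm r ?N \<in> carrier_mat ?N ?N" "Qm r ?N \<in> carrier_mat ?N ?N"
    by (auto simp: Sm_def Tm_def Pm_def Qm_def)
  have "Sm r f w = Sm r f w * (Pm r ?N * Qm r ?N)" using c by (simp add: PQ)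
  also have "\<dots> = (Sm r f w * Pm r ?N) * Qm r ?N" using c by simp
  also have "\<dots> = Pm r ?N * Tm r f w * Qm r ?N" unfolding SP_PT ..
  finally have e: "Sm r f w = Pm r ?N * Tm r f w * Qm r ?N" .
  show ?thesis unfolding similar_mat_def similar_mat_wit_def Let_def
    by (intro exI[of _ "Pm r ?N"] exI[of _ "Qm r ?N"]) (use c e PQ QP in \<open>auto simp: Sm_def\<close>)
qed

lemma char_poly_four_block_ur0:
  fixes A1 :: "'a :: idom mat"
  assumes A1: "A1 \<in> carrier_mat n n" and A3: "A3 \<in> carrier_mat m n" and A4: "A4 \<in> carrier_mat m m"
  shows "char_poly (four_block_mat A1 (0\<^sub>m n m) A3 A4) = char_poly A1 * char_poly A4"
proof -
  let ?cm = "\<lambda>A. [:0, 1:] \<cdot>\<^sub>m 1\<^sub>m (dim_row A) + map_mat (\<lambda>a. [:- a:]) A"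
  have "char_poly (four_block_mat A1 (0\<^sub>m n m) A3 A4) = det (?cm (four_block_mat A1 (0\<^sub>m n m) A3 A4))"
    unfolding char_poly_defs ..
  also have "?cm (four_block_mat A1 (0\<^sub>m n m) A3 A4) =
     four_block_mat (?cm A1) (0\<^sub>m n m) (map_mat (\<lambda>a. [:- a:]) A3) (?cm A4)"
    by (rule eq_matI, insert A1 A3 A4, auto simp: one_poly_def)
  also have "det \<dots> = det (?cm A1) * det (?cm A4)"
    by (rule det_four_block_mat_upper_right_zero, insert A1 A3 A4, auto)
  also have "\<dots> = char_poly A1 * char_poly A4" unfolding char_poly_defs ..
  finally show ?thesis .
qed

definition Bm :: "nat \<Rightarrow> nat \<Rightarrow> (nat \<Rightarrow> nat \<Rightarrow> complex) \<Rightarrow> complex mat" where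
  "Bm r f w = mat 3 3 (\<lambda>(i, j). Tf r f w i j)"
definition Ym :: "nat \<Rightarrow> nat \<Rightarrow> (nat \<Rightarrow> nat \<Rightarrow> complex) \<Rightarrow> complex mat" where
  "Ym r f w = mat (r + f) 3 (\<lambda>(i, j). Tf r f w (i + 3) j)"
definition Dm :: "nat \<Rightarrow> nat \<Rightarrow> (nat \<Rightarrow> nat \<Rightarrow> complex) \<Rightarrow> complex mat" where
  "Dm r f w = mat (r + f) (r + f) (\<lambda>(i, j). Tf r f w (i + 3) (j + 3))"

lemma T_block: "Tm r f w = four_block_mat (Bm r f w) (0\<^sub>m 3 (r + f)) (Ym r f w) (Dm r f w)"
  by (rule eq_matI) (auto simp: Tm_def Bm_def Ym_def Dm_def Tf_def)

lemma char_poly_D: "char_poly (Dm r f w) = [:w 1 1, 1:] ^ r * [:w 2 2, 1:] ^ f"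
proof -
  have c: "Dm r f w \<in> carrier_mat (r + f) (r + f)" by (simp add: Dm_def)
  have ut: "upper_triangular (Dm r f w)"
    unfolding upper_triangular_def by (auto simp: Dm_def Tf_def)
  have "char_poly (Dm r f w) = prod_list (map (\<lambda>a. [:- a, 1:]) (diag_mat (Dm r f w)))"
    by (rule char_poly_upper_triangular[OF c ut])
  also have "map (\<lambda>a. [:- a, 1:]) (diag_mat (Dm r f w)) = replicate r [:w 1 1, 1:] @ replicate f [:w 2 2, 1:]"
  proof -
    have "diag_mat (Dm r f w) = map (\<lambda>i. Tf r f w (i + 3) (i + 3)) ([0..<r] @ [r..<r + f])"
      unfolding diag_mat_def Dm_def by (simp add: upt_add_eq_append[symmetric])
    also have "\<dots> = replicate r (- w 1 1) @ replicate f (- w 2 2)"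
    proof -
      have "map (\<lambda>i. Tf r f w (i + 3) (i + 3)) [0..<r] = map (\<lambda>i. - w 1 1) [0..<r]"
        by (rule map_cong) (auto simp: Tf_def cls_def)
      moreover have "map (\<lambda>i. Tf r f w (i + 3) (i + 3)) [r..<r + f] = map (\<lambda>i. - w 2 2) [r..<r + f]"
        by (rule map_cong) (auto simp: Tf_def cls_def)
      ultimately show ?thesis by (simp add: map_replicate_const)
    qed
    finally show ?thesis by simp
  qed
  finally show ?thesis by simp
qed

lemma char_poly_S: "char_poly (Sm r f w) = char_poly (Bm r f w) * ([:w 1 1, 1:] ^ r * [:w 2 2, 1:] ^ f)"
proof -
  have "char_poly (Sm r f w) = char_poly (Tm r f w)" by (rule char_poly_similar[OF similar_S_T])
  also have "\<dots> = char_poly (Bm r f w) * char_poly (Dm r f w)"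
    unfolding T_block by (rule char_poly_four_block_ur0) (auto simp: Bm_def Ym_def Dm_def)
  finally show ?thesis by (simp add: char_poly_D)
qed

lemma det2:
  fixes A :: "'a :: comm_ring_1 mat"
  assumes A: "A \<in> carrier_mat 2 2"
  shows "det A = A $$ (0,0) * A $$ (1,1) - A $$ (0,1) * A $$ (1,0)"
proof -
  have "det A = (\<Sum>j<2. A $$ (0,j) * cofactor A 0 j)" by (rule laplace_expansion_row[OF A]) simp
  also have "\<dots> = A $$ (0,0) * cofactor A 0 0 + A $$ (0,1) * cofactor A 0 1"
    by (simp add: numeral_2_eq_2)
  also have "cofactor A 0 0 = A $$ (1,1)"
    unfolding cofactor_def using A by (simp add: det_single mat_delete_def)
  also have "cofactor A 0 1 = - A $$ (1,0)"
    unfolding cofactor_def using A by (simp add: det_single mat_delete_def)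
  finally show ?thesis by (simp add: algebra_simps)
qed

lemma det3:
  fixes A :: "'a :: comm_ring_1 mat"
  assumes A: "A \<in> carrier_mat 3 3"
  shows "det A = A $$ (0,0) * (A $$ (1,1) * A $$ (2,2) - A $$ (1,2) * A $$ (2,1))
     - A $$ (0,1) * (A $$ (1,0) * A $$ (2,2) - A $$ (1,2) * A $$ (2,0))
     + A $$ (0,2) * (A $$ (1,0) * A $$ (2,1) - A $$ (1,1) * A $$ (2,0))"
proof -
  have "det A = (\<Sum>j<3. A $$ (0,j) * cofactor A 0 j)" by (rule laplace_expansion_row[OF A]) simp
  also have "\<dots> = A $$ (0,0) * cofactor A 0 0 + A $$ (0,1) * cofactor A 0 1 + A $$ (0,2) * cofactor A 0 2"
  proof -
    have "{..<3::nat} = {0,1,2}" by auto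
    then show ?thesis by (simp add: algebra_simps)
  qed
  also have "cofactor A 0 0 = A $$ (1,1) * A $$ (2,2) - A $$ (1,2) * A $$ (2,1)"
    unfolding cofactor_def using A by (subst det2) (auto simp: mat_delete_def mat_delete_carrier numeral_2_eq_2)
  also have "cofactor A 0 1 = - (A $$ (1,0) * A $$ (2,2) - A $$ (1,2) * A $$ (2,0))"
    unfolding cofactor_def using A by (subst det2) (auto simp: mat_delete_def mat_delete_carrier numeral_2_eq_2)
  also have "cofactor A 0 2 = A $$ (1,0) * A $$ (2,1) - A $$ (1,1) * A $$ (2,0)"
    unfolding cofactor_def using A by (subst det2) (auto simp: mat_delete_def mat_delete_carrier numeral_2_eq_2)
  finally show ?thesis by (simp add: algebra_simps)
qed

lemma poly_char_poly_B:
  "poly (char_poly (Bm r f w)) x =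
     x * ((x - w 1 1 * of_nat r) * (x - w 2 2 * of_nat f) - (- (w 1 2 * of_nat (r + 1))) * (- (w 2 1 * of_nat (f + 1))))
     - (- w 0 1) * ((- (w 1 0 * of_nat (r + 1))) * (x - w 2 2 * of_nat f) - (- (w 1 2 * of_nat (r + 1))) * (- (w 2 0 * of_nat (f + 1))))
     + (- w 0 2) * ((- (w 1 0 * of_nat (r + 1))) * (- (w 2 1 * of_nat (f + 1))) - (x - w 1 1 * of_nat r) * (- (w 2 0 * of_nat (f + 1))))"
proof -
  have c: "Bm r f w \<in> carrier_mat 3 3" by (simp add: Bm_def)
  show ?thesis unfolding char_poly_matrix[OF c]
    by (subst det3) (use c in \<open>auto simp: char_matrix_def Bm_def Tf_def dd_def algebra_simps\<close>)
qed

lemma sum_nth_distinct: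
  assumes "distinct xs"
  shows "(\<Sum>l<length xs. g (xs ! l)) = (\<Sum>x\<in>set xs. g x)"
proof -
  have inj: "inj_on (nth xs) {..<length xs}" using assms by (simp add: inj_on_def nth_eq_iff_index_eq)
  have im: "nth xs ` {..<length xs} = set xs" by (auto simp: in_set_conv_nth)
  show ?thesis using sum.reindex[OF inj, of g] im by simp
qed

lemma sum_set_delta:
  assumes "a \<in> A" "finite A"
  shows "(\<Sum>x\<in>A. if a = x then g x else (0::'b::comm_monoid_add)) = g a"
  using sum.delta'[OF assms(2), of a g] assms(1) by simp

lemma char_poly_perm:
  fixes F :: "'a \<Rightarrow> 'a \<Rightarrow> complex"
  assumes dv: "distinct vs" and dw: "distinct ws" and sv: "set vs = set ws"
  shows "char_poly (mat (length vs) (length vs) (\<lambda>(i, j). F (vs ! i) (vs ! j)))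
       = char_poly (mat (length ws) (length ws) (\<lambda>(i, j). F (ws ! i) (ws ! j)))"
proof -
  have len: "length ws = length vs" using dv dw sv by (metis distinct_card)
  define N where "N = length vs"
  define A where "A = mat N N (\<lambda>(i, j). F (vs ! i) (vs ! j))"
  define B where "B = mat N N (\<lambda>(i, j). F (ws ! i) (ws ! j))"
  define P :: "complex mat" where "P = mat N N (\<lambda>(i, j). if vs ! i = ws ! j then 1 else 0)"
  define Q :: "complex mat" where "Q = mat N N (\<lambda>(i, j). if ws ! i = vs ! j then 1 else 0)"
  have c: "A \<in> carrier_mat N N" "B \<in> carrier_mat N N" "P \<in> carrier_mat N N" "Q \<in> carrier_mat N N"
    by (auto simp: A_def B_def P_def Q_def)
  have sw: "(\<Sum>l<N. g (ws ! l)) = (\<Sum>x\<in>set vs. g x)" for g :: "'a \<Rightarrow> complex"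
    using sum_nth_distinct[OF dw, of g] len sv by (simp add: N_def)
  have sv': "(\<Sum>l<N. g (vs ! l)) = (\<Sum>x\<in>set vs. g x)" for g :: "'a \<Rightarrow> complex"
    using sum_nth_distinct[OF dv, of g] by (simp add: N_def)
  have PQ: "P * Q = 1\<^sub>m N"
  proof (rule eq_matI)
    fix i j assume "i < dim_row (1\<^sub>m N :: complex mat)" "j < dim_col (1\<^sub>m N :: complex mat)"
    then have i: "i < N" and j: "j < N" by auto
    have "(P * Q) $$ (i, j) = (\<Sum>l<N. (if vs ! i = ws ! l then 1 else 0) * (if ws ! l = vs ! j then 1 else 0))"
      unfolding P_def Q_def by (simp add: mult_mat_entry[OF i j])
    also have "\<dots> = (\<Sum>x\<in>set vs. if vs ! i = x then (if x = vs ! j then 1 else 0) else 0)"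
      by (subst sw) (rule sum.cong, auto)
    also have "\<dots> = (if vs ! i = vs ! j then 1 else 0)"
      by (rule sum_set_delta) (use i in \<open>auto simp: N_def\<close>)
    also have "\<dots> = 1\<^sub>m N $$ (i, j)" using i j dv by (simp add: N_def nth_eq_iff_index_eq)
    finally show "(P * Q) $$ (i, j) = 1\<^sub>m N $$ (i, j)" .
  qed (auto simp: P_def Q_def)
  have QP: "Q * P = 1\<^sub>m N"
  proof (rule eq_matI)
    fix i j assume "i < dim_row (1\<^sub>m N :: complex mat)" "j < dim_col (1\<^sub>m N :: complex mat)"
    then have i: "i < N" and j: "j < N" by auto
    have "(Q * P) $$ (i, j) = (\<Sum>l<N. (if ws ! i = vs ! l then 1 else 0) * (if vs ! l = ws ! j then 1 else 0))"
      unfolding P_def Q_def by (simp add: mult_mat_entry[OF i j])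
    also have "\<dots> = (\<Sum>x\<in>set vs. if ws ! i = x then (if x = ws ! j then 1 else 0) else 0)"
      by (subst sv') (rule sum.cong, auto)
    also have "\<dots> = (if ws ! i = ws ! j then 1 else 0)"
      by (rule sum_set_delta) (use i len sv in \<open>auto simp: N_def\<close>)
    also have "\<dots> = 1\<^sub>m N $$ (i, j)" using i j dw len by (simp add: N_def nth_eq_iff_index_eq)
    finally show "(Q * P) $$ (i, j) = 1\<^sub>m N $$ (i, j)" .
  qed (auto simp: P_def Q_def)
  have AP: "A * P = P * B"
  proof (rule eq_matI)
    fix i j assume "i < dim_row (P * B)" "j < dim_col (P * B)"
    then have i: "i < N" and j: "j < N" by (auto simp: P_def B_def)
    have "(A * P) $$ (i, j) = (\<Sum>l<N. F (vs ! i) (vs ! l) * (if vs ! l = ws ! j then 1 else 0))"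
      unfolding A_def P_def by (simp add: mult_mat_entry[OF i j])
    also have "\<dots> = (\<Sum>x\<in>set vs. if ws ! j = x then F (vs ! i) x else 0)"
      by (subst sv') (rule sum.cong, auto)
    also have "\<dots> = F (vs ! i) (ws ! j)"
      by (rule sum_set_delta) (use j len sv in \<open>auto simp: N_def\<close>)
    also have "\<dots> = (\<Sum>x\<in>set vs. if vs ! i = x then F x (ws ! j) else 0)"
      by (rule sum_set_delta[symmetric]) (use i in \<open>auto simp: N_def\<close>)
    also have "\<dots> = (\<Sum>l<N. (if vs ! i = ws ! l then 1 else 0) * F (ws ! l) (ws ! j))"
      by (subst sw) (rule sum.cong, auto)
    also have "\<dots> = (P * B) $$ (i, j)"
      unfolding B_def P_def by (simp add: mult_mat_entry[OF i j])
    finally show "(A * P) $$ (i, j) = (P * B) $$ (i, j)" .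
  qed (auto simp: P_def B_def A_def)
  have "A = A * (P * Q)" using c by (simp add: PQ)
  also have "\<dots> = (A * P) * Q" using c by simp
  also have "\<dots> = P * B * Q" unfolding AP ..
  finally have e: "A = P * B * Q" .
  have "similar_mat A B" unfolding similar_mat_def similar_mat_wit_def Let_def
    by (intro exI[of _ P] exI[of _ Q]) (use c e PQ QP in \<open>auto simp: A_def\<close>)
  then have "char_poly A = char_poly B" by (rule char_poly_similar)
  then show ?thesis unfolding A_def B_def N_def len .
qed

lemma sombor_perm:
  assumes "distinct vs" "distinct ws" "set vs = set ws"
  shows "char_poly (sombor_matrix V E vs) = char_poly (sombor_matrix V E ws)"
  unfolding sombor_matrix_def
  using char_poly_perm[OF assms, of "\<lambda>x y. if E x y then complex_of_real (sqrt (real (graph_deg V E x) ^ 2 + real (graph_deg V E y) ^ 2)) else 0"]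
  by (simp add: case_prod_beta)

lemma poly_char_poly_B_odd:
  fixes a c x :: complex
  assumes "w 0 1 = a" "w 1 0 = a" "w 0 2 = c" "w 2 0 = c" "w 1 2 = 0" "w 2 1 = 0"
  shows "poly (char_poly (Bm r f w)) x = x * (x - w 1 1 * of_nat r) * (x - w 2 2 * of_nat f)
     - of_nat (r + 1) * (a * a) * (x - w 2 2 * of_nat f) - of_nat (f + 1) * (c * c) * (x - w 1 1 * of_nat r)"
  unfolding poly_char_poly_B assms by (simp add: algebra_simps)

lemma poly_char_poly_B_const:
  fixes c x :: complex
  assumes "\<And>i j. w i j = c"
  shows "poly (char_poly (Bm r f w)) x = (x + c) ^ 2 * (x - c * (of_nat r + of_nat f + 2))"
  unfolding poly_char_poly_B assms by (simp add: algebra_simps power2_eq_square)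




definition gv :: "nat \<Rightarrow> nat \<Rightarrow> nat \<times> bool" where
  "gv n i = (if i = 0 then (0, False) else if i = 1 then (1, False) else if i = 2 then (0, True)
     else if i \<le> n then (i - 1, False) else (i - n, True))"

lemma gv_carrier: "n \<ge> 3 \<Longrightarrow> i < 2 * n \<Longrightarrow> gv n i \<in> carrier (dihedral_group n)"
  by (auto simp: gv_def dih_carrier)

lemma gv_e: "n \<ge> 3 \<Longrightarrow> gv n i = (0, False) \<longleftrightarrow> i = 0"
  by (auto simp: gv_def)

lemma gv_snd: "n \<ge> 3 \<Longrightarrow> snd (gv n i) \<longleftrightarrow> cls (n - 2) i = 2"
  by (auto simp: gv_def cls_def)

definition gi :: "nat \<Rightarrow> nat \<times> bool \<Rightarrow> nat" where
  "gi n x = (if snd x then (if fst x = 0 then 2 else fst x + n) else (if fst x = 0 then 0 else if fst x = 1 then 1 else fst x + 1))"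

lemma gi_gv: "n \<ge> 3 \<Longrightarrow> i < 2 * n \<Longrightarrow> gi n (gv n i) = i"
  by (cases "i = 0"; cases "i = 1"; cases "i = 2"; cases "i \<le> n"; simp add: gv_def gi_def)

lemma gv_inj: "n \<ge> 3 \<Longrightarrow> i < 2 * n \<Longrightarrow> j < 2 * n \<Longrightarrow> gv n i = gv n j \<Longrightarrow> i = j"
  by (metis gi_gv)

lemma gv_surj: assumes "n \<ge> 3" "x \<in> carrier (dihedral_group n)" shows "\<exists>i<2 * n. gv n i = x"
proof -
  obtain k s where x: "x = (k, s)" "k < n" using assms(2) by (cases x) (auto simp: dih_carrier)
  show ?thesis
  proof (cases s)
    case True
    show ?thesis
    proof (cases "k = 0")
      case True then show ?thesis using \<open>s\<close> x assms by (intro exI[of _ 2]) (auto simp: gv_def)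
    next
      case False then show ?thesis using \<open>s\<close> x assms by (intro exI[of _ "k + n"]) (auto simp: gv_def)
    qed
  next
    case False
    consider "k = 0" | "k = 1" | "k \<ge> 2" by linarith
    then show ?thesis
    proof cases
      case 1 then show ?thesis using False x assms by (intro exI[of _ 0]) (auto simp: gv_def)
    next
      case 2 then show ?thesis using False x assms by (intro exI[of _ 1]) (auto simp: gv_def)
    next
      case 3 then show ?thesis using False x assms by (intro exI[of _ "k + 1"]) (auto simp: gv_def)
    qed
  qed
qed

definition wsl :: "nat \<Rightarrow> (nat \<times> bool) list" where
  "wsl n = map (gv n) [0..<2 * n]"

lemma wsl_distinct: "n \<ge> 3 \<Longrightarrow> distinct (wsl n)"
  unfolding wsl_def distinct_map by (auto simp: inj_on_def intro: gv_inj)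

lemma wsl_set: assumes "n \<ge> 3" shows "set (wsl n) = carrier (dihedral_group n)"
proof
  show "set (wsl n) \<subseteq> carrier (dihedral_group n)"
    unfolding wsl_def using gv_carrier[OF assms] by auto
  show "carrier (dihedral_group n) \<subseteq> set (wsl n)"
  proof
    fix x assume "x \<in> carrier (dihedral_group n)"
    then obtain i where "i < 2 * n" "gv n i = x" using gv_surj[OF assms] by blast
    then show "x \<in> set (wsl n)" unfolding wsl_def by auto
  qed
qed

lemma card_dih: "card (carrier (dihedral_group n)) = 2 * n"
proof -
  have "carrier (dihedral_group n) = {..<n} \<times> (UNIV :: bool set)" by (auto simp: dih_carrier)
  then show ?thesis by (simp add: card_cartesian_product)
qed


lemma sombor_ws_gen:
  assumes n: "n \<ge> 3"
    and adj: "\<And>i j. i < 2 * n \<Longrightarrow> j < 2 * n \<Longrightarrow> E (gv n i) (gv n j) \<longleftrightarrow> i \<noteq> j \<and> ac (cls (n - 2) i) (cls (n - 2) j)"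
    and deg: "\<And>i. i < 2 * n \<Longrightarrow> graph_deg V E (gv n i) = dg (cls (n - 2) i)"
  shows "sombor_matrix V E (wsl n) = Sm (n - 2) (n - 1)
     (\<lambda>x y. if ac x y then complex_of_real (sqrt (real (dg x) ^ 2 + real (dg y) ^ 2)) else 0)"
proof -
  have N: "3 + (n - 2) + (n - 1) = 2 * n" using n by simp
  have N': "3 + (n - 2) + (n - Suc 0) = 2 * n" using n by simp
  show ?thesis
  proof (rule eq_matI)
    fix i j assume "i < dim_row (Sm (n - 2) (n - 1)
     (\<lambda>x y. if ac x y then complex_of_real (sqrt (real (dg x) ^ 2 + real (dg y) ^ 2)) else 0))"
      "j < dim_col (Sm (n - 2) (n - 1)
     (\<lambda>x y. if ac x y then complex_of_real (sqrt (real (dg x) ^ 2 + real (dg y) ^ 2)) else 0))"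
    then have i: "i < 2 * n" and j: "j < 2 * n" using N by (auto simp: Sm_def)
    have l: "length (wsl n) = 2 * n" by (simp add: wsl_def)
    have "sombor_matrix V E (wsl n) $$ (i, j) = (if E (gv n i) (gv n j) then complex_of_real (sqrt (real (graph_deg V E (gv n i)) ^ 2 + real (graph_deg V E (gv n j)) ^ 2)) else 0)"
      unfolding sombor_matrix_def l using i j by (simp add: wsl_def)
    also have "\<dots> = Sm (n - 2) (n - 1)
     (\<lambda>x y. if ac x y then complex_of_real (sqrt (real (dg x) ^ 2 + real (dg y) ^ 2)) else 0) $$ (i, j)"
      unfolding Sm_def N using i j by (simp add: adj deg Sf_def)
    finally show "sombor_matrix V E (wsl n) $$ (i, j) = Sm (n - 2) (n - 1)
     (\<lambda>x y. if ac x y then complex_of_real (sqrt (real (dg x) ^ 2 + real (dg y) ^ 2)) else 0) $$ (i, j)" .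
  qed (use N in \<open>auto simp: Sm_def sombor_matrix_def wsl_def\<close>)
qed


lemma dih_carrier_prod: "carrier (dihedral_group n) = {..<n} \<times> (UNIV :: bool set)"
  by (auto simp: dih_carrier)

lemma deg_odd:
  assumes n: "n \<ge> 3" "odd n" and x: "x \<in> carrier (dihedral_group n)"
  shows "graph_deg (carrier (dihedral_group n)) (osc_adj (dihedral_group n)) x =
     (if x = (0, False) then 2 * n - 1 else if snd x then n else n - 1)"
proof -
  let ?V = "carrier (dihedral_group n)"
  let ?E = "osc_adj (dihedral_group n)"
  have fin: "finite ?V" unfolding dih_carrier_prod by simp
  have adj: "\<And>u. u \<in> ?V \<Longrightarrow> ?E x u \<longleftrightarrow> x \<noteq> u \<and> (x = (0, False) \<or> u = (0, False) \<or> snd x = snd u)"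
    using osc_odd[OF n x] by blast
  obtain k s where xk: "x = (k, s)" "k < n" using x by (cases x) (auto simp: dih_carrier)
  show ?thesis
  proof (cases "x = (0, False)")
    case True
    have "{u \<in> ?V. ?E x u} = ?V - {x}"
    proof (rule Set.set_eqI)
      fix u show "u \<in> {u \<in> ?V. ?E x u} \<longleftrightarrow> u \<in> ?V - {x}"
      proof (cases "u \<in> ?V")
        case uV: True
        have "?E x u \<longleftrightarrow> x \<noteq> u \<and> (x = (0, False) \<or> u = (0, False) \<or> snd x = snd u)" by (rule adj[OF uV])
        then show ?thesis using uV True by auto
      qed simp
    qed
    then have "graph_deg ?V ?E x = card (?V - {x})" by (simp add: graph_deg_def)
    also have "\<dots> = 2 * n - 1" using fin x by (simp add: card_Diff_singleton card_dih)
    finally show ?thesis using True by simp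
  next
    case ne: False
    show ?thesis
    proof (cases s)
      case True
      have "{u \<in> ?V. ?E x u} = insert (0, False) ((\<lambda>j. (j, True)) ` ({..<n} - {k}))"
      proof (rule Set.set_eqI)
        fix u :: "nat \<times> bool"
        obtain j t where u: "u = (j, t)" by (cases u)
        show "u \<in> {u \<in> ?V. ?E x u} \<longleftrightarrow> u \<in> insert (0, False) ((\<lambda>j. (j, True)) ` ({..<n} - {k}))"
        proof (cases "j < n")
          case True
          then have uV: "u \<in> ?V" using u by (simp add: dih_carrier)
          have "?E x u \<longleftrightarrow> x \<noteq> u \<and> (x = (0, False) \<or> u = (0, False) \<or> snd x = snd u)" by (rule adj[OF uV])
          then show ?thesis using uV u xk ne \<open>s\<close> True by auto
        next
          case False
          then show ?thesis using u n by (auto simp: dih_carrier)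
        qed
      qed
      moreover have "card (insert (0, False) ((\<lambda>j. (j, True)) ` ({..<n} - {k}))) = n"
      proof -
        have "card ((\<lambda>j. (j, True)) ` ({..<n} - {k})) = n - 1"
          using xk by (subst card_image) (auto simp: inj_on_def)
        then show ?thesis using n by (subst card_insert_disjoint) auto
      qed
      ultimately show ?thesis using ne True xk by (simp add: graph_deg_def)
    next
      case False
      have k0: "k \<noteq> 0" using ne xk False by auto
      have "{u \<in> ?V. ?E x u} = (\<lambda>j. (j, False)) ` ({..<n} - {k})"
      proof (rule Set.set_eqI)
        fix u :: "nat \<times> bool"
        obtain j t where u: "u = (j, t)" by (cases u)
        show "u \<in> {u \<in> ?V. ?E x u} \<longleftrightarrow> u \<in> (\<lambda>j. (j, False)) ` ({..<n} - {k})"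
        proof (cases "j < n")
          case True
          then have uV: "u \<in> ?V" using u by (simp add: dih_carrier)
          have "?E x u \<longleftrightarrow> x \<noteq> u \<and> (x = (0, False) \<or> u = (0, False) \<or> snd x = snd u)" by (rule adj[OF uV])
          then show ?thesis using uV u xk ne \<open>\<not> s\<close> k0 True by auto
        next
          case False
          then show ?thesis using u by (auto simp: dih_carrier)
        qed
      qed
      moreover have "card ((\<lambda>j. (j, False)) ` ({..<n} - {k})) = n - 1"
        using xk by (subst card_image) (auto simp: inj_on_def)
      ultimately show ?thesis using ne False xk by (simp add: graph_deg_def)
    qed
  qed
qed

lemma deg_even:
  assumes n: "n \<ge> 3" "even n" and x: "x \<in> carrier (dihedral_group n)"
  shows "graph_deg (carrier (dihedral_group n)) (osc_adj (dihedral_group n)) x = 2 * n - 1"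
proof -
  let ?V = "carrier (dihedral_group n)"
  let ?E = "osc_adj (dihedral_group n)"
  have fin: "finite ?V" unfolding dih_carrier_prod by simp
  have "{u \<in> ?V. ?E x u} = ?V - {x}"
  proof (rule Set.set_eqI)
    fix u show "u \<in> {u \<in> ?V. ?E x u} \<longleftrightarrow> u \<in> ?V - {x}"
    proof (cases "u \<in> ?V")
      case uV: True
      have "?E x u \<longleftrightarrow> x \<noteq> u" by (rule osc_even[OF n x uV])
      then show ?thesis using uV by auto
    qed simp
  qed
  then have "graph_deg ?V ?E x = card (?V - {x})" by (simp add: graph_deg_def)
  also have "\<dots> = 2 * n - 1" using fin x by (simp add: card_Diff_singleton card_dih)
  finally show ?thesis .
qed


lemma sqrt_sq2: "a \<ge> 0 \<Longrightarrow> sqrt (a ^ 2 + a ^ 2) = a * sqrt 2"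
proof -
  assume a: "a \<ge> 0"
  have "sqrt (a ^ 2 + a ^ 2) = sqrt (2 * a ^ 2)" by simp
  also have "\<dots> = sqrt 2 * sqrt (a ^ 2)" by (rule real_sqrt_mult)
  also have "\<dots> = sqrt 2 * a" using a by simp
  finally show ?thesis by simp
qed

lemma sqrt_2sq: "a \<ge> 0 \<Longrightarrow> sqrt (2 * a ^ 2) = a * sqrt 2"
  using sqrt_sq2[of a] by simp

lemma of_real_sqrt_sq: "x \<ge> 0 \<Longrightarrow> complex_of_real (sqrt x) * complex_of_real (sqrt x) = complex_of_real x"
  by (simp flip: of_real_mult)

lemma char_poly_nz: "A \<in> carrier_mat n n \<Longrightarrow> char_poly A \<noteq> 0"
  using degree_monic_char_poly[of A n] by auto

lemma linpow_nz: "[:a, 1:] ^ k \<noteq> (0 :: complex poly)" by simp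

lemma cls_0: "cls r i = 0 \<longleftrightarrow> i = 0" by (simp add: cls_def)


lemma odd_case:
  fixes n :: nat and vs :: "(nat \<times> bool) list"
  assumes n: "n \<ge> 3" and odd: "odd n"
    and dv: "distinct vs" and sv: "set vs = carrier (dihedral_group n)"
  shows "sombor_spectrum (carrier (dihedral_group n)) (osc_adj (dihedral_group n)) vs =
             replicate_mset (n - 2) (- (of_nat n - 1) * complex_of_real (sqrt 2))
           + replicate_mset (n - 1) (- of_nat n * complex_of_real (sqrt 2))
           + proots ([:0, 1:] * [:- (of_nat n - 1) * (of_nat n - 2) * complex_of_real (sqrt 2), 1:]
                              * [:- of_nat n * (of_nat n - 1) * complex_of_real (sqrt 2), 1:]
                     - smult ((of_nat n - 1) * (5 * of_nat n ^ 2 - 6 * of_nat n + 2))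
                              [:- of_nat n * (of_nat n - 1) * complex_of_real (sqrt 2), 1:]
                     - smult (of_nat n * (5 * of_nat n ^ 2 - 4 * of_nat n + 1))
                              [:- (of_nat n - 1) * (of_nat n - 2) * complex_of_real (sqrt 2), 1:])"
proof -
  let ?V = "carrier (dihedral_group n)"
  let ?E = "osc_adj (dihedral_group n)"
  define r where "r = n - 2"
  define f where "f = n - 1"
  define ac where "ac x y = (x = 0 \<or> y = 0 \<or> (x = 2 \<longleftrightarrow> y = (2::nat)))" for x y :: nat
  define dg where "dg x = (if x = 0 then 2 * n - 1 else if x = 2 then n else n - 1)" for x :: nat
  define w where "w x y = (if ac x y then complex_of_real (sqrt (real (dg x) ^ 2 + real (dg y) ^ 2)) else 0)" for x y :: nat
  define s where "s = complex_of_real (sqrt 2)"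
  have adj: "?E (gv n i) (gv n j) \<longleftrightarrow> i \<noteq> j \<and> ac (cls (n - 2) i) (cls (n - 2) j)"
    if i: "i < 2 * n" and j: "j < 2 * n" for i j
  proof -
    have "?E (gv n i) (gv n j) \<longleftrightarrow> gv n i \<noteq> gv n j \<and> (gv n i = (0, False) \<or> gv n j = (0, False) \<or> snd (gv n i) = snd (gv n j))"
      by (rule osc_odd[OF n odd gv_carrier[OF n i] gv_carrier[OF n j]])
    also have "\<dots> \<longleftrightarrow> i \<noteq> j \<and> ac (cls (n - 2) i) (cls (n - 2) j)"
      using gv_inj[OF n i j] gv_e[OF n, of i] gv_e[OF n, of j] gv_snd[OF n, of i] gv_snd[OF n, of j]
        cls_0[of "n - 2" i] cls_0[of "n - 2" j] unfolding ac_def by auto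
    finally show ?thesis .
  qed
  have deg: "graph_deg ?V ?E (gv n i) = dg (cls (n - 2) i)" if i: "i < 2 * n" for i
    using deg_odd[OF n odd gv_carrier[OF n i]] gv_e[OF n, of i] gv_snd[OF n, of i] cls_0[of "n - 2" i]
    unfolding dg_def by auto
  have S: "sombor_matrix ?V ?E (wsl n) = Sm r f w"
    unfolding r_def f_def w_def by (rule sombor_ws_gen[OF n adj deg])
  have cp: "char_poly (sombor_matrix ?V ?E vs) = char_poly (Bm r f w) * ([:w 1 1, 1:] ^ r * [:w 2 2, 1:] ^ f)"
    using sombor_perm[OF dv wsl_distinct[OF n], of ?V ?E] sv wsl_set[OF n] S char_poly_S by simp
  have rn: "real (n - 1) = real n - 1" "real (2 * n - 1) = 2 * real n - 1" using n by auto
  have w11: "w 1 1 = (of_nat n - 1) * s"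
    unfolding w_def ac_def dg_def s_def using n by (simp add: sqrt_sq2 sqrt_2sq rn)
  have w22: "w 2 2 = of_nat n * s"
    unfolding w_def ac_def dg_def s_def using n by (simp add: sqrt_sq2 sqrt_2sq)
  define a where "a = complex_of_real (sqrt ((2 * real n - 1) ^ 2 + (real n - 1) ^ 2))"
  define c where "c = complex_of_real (sqrt ((2 * real n - 1) ^ 2 + (real n) ^ 2))"
  have wa: "w 0 1 = a" "w 1 0 = a" unfolding w_def ac_def dg_def a_def using n by (simp_all add: rn)
  have wc: "w 0 2 = c" "w 2 0 = c" unfolding w_def ac_def dg_def c_def using n by (simp_all add: rn)
  have w0: "w 1 2 = 0" "w 2 1 = 0" unfolding w_def ac_def by simp_all
  have aa: "a * a = 5 * of_nat n ^ 2 - 6 * of_nat n + 2"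
  proof -
    have "a * a = complex_of_real ((2 * real n - 1) ^ 2 + (real n - 1) ^ 2)"
      unfolding a_def by (rule of_real_sqrt_sq) simp
    also have "\<dots> = 5 * of_nat n ^ 2 - 6 * of_nat n + 2" by (simp add: power2_eq_square algebra_simps)
    finally show ?thesis .
  qed
  have cc: "c * c = 5 * of_nat n ^ 2 - 4 * of_nat n + 1"
  proof -
    have "c * c = complex_of_real ((2 * real n - 1) ^ 2 + (real n) ^ 2)"
      unfolding c_def by (rule of_real_sqrt_sq) simp
    also have "\<dots> = 5 * of_nat n ^ 2 - 4 * of_nat n + 1" by (simp add: power2_eq_square algebra_simps)
    finally show ?thesis .
  qed
  have nr: "(of_nat r :: complex) = of_nat n - 2" "(of_nat (r + 1) :: complex) = of_nat n - 1"
    "(of_nat f :: complex) = of_nat n - 1" "(of_nat (f + 1) :: complex) = of_nat n"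
    unfolding r_def f_def using n by (auto simp: of_nat_diff)
  define Q where "Q = [:0, 1:] * [:- (of_nat n - 1) * (of_nat n - 2) * s, 1:]
                              * [:- of_nat n * (of_nat n - 1) * s, 1:]
                     - smult ((of_nat n - 1) * (5 * of_nat n ^ 2 - 6 * of_nat n + 2))
                              [:- of_nat n * (of_nat n - 1) * s, 1:]
                     - smult (of_nat n * (5 * of_nat n ^ 2 - 4 * of_nat n + 1))
                              [:- (of_nat n - 1) * (of_nat n - 2) * s, 1:]"
  have BQ: "char_poly (Bm r f w) = Q"
  proof (rule poly_eq_poly_eq_iff[THEN iffD1], rule ext)
    fix x
    show "poly (char_poly (Bm r f w)) x = poly Q x"
      unfolding poly_char_poly_B_odd[OF wa wc w0] w11 w22 aa cc nr Q_def
      by (simp add: algebra_simps)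
  qed
  have nzB: "char_poly (Bm r f w) \<noteq> 0" by (rule char_poly_nz[of _ 3]) (simp add: Bm_def)
  have "sombor_spectrum ?V ?E vs = proots (char_poly (Bm r f w)) + (proots ([:w 1 1, 1:] ^ r) + proots ([:w 2 2, 1:] ^ f))"
    unfolding sombor_spectrum_def cp
    by (simp add: proots_mult nzB linpow_nz del: proots_power)
  also have "\<dots> = proots Q + (replicate_mset (n - 2) (- w 1 1) + replicate_mset (n - 1) (- w 2 2))"
    unfolding BQ by (simp add: proots_power r_def f_def)
  finally have X: "sombor_spectrum ?V ?E vs = proots Q + (replicate_mset (n - 2) (- w 1 1) + replicate_mset (n - 1) (- w 2 2))" .
  have e1: "- w 1 1 = - (of_nat n - 1) * s" unfolding w11 by (simp only: minus_mult_left)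
  have e2: "- w 2 2 = - of_nat n * s" unfolding w22 by simp
  show ?thesis unfolding X e1 e2 unfolding Q_def s_def by (rule add.commute)
qed


lemma even_case:
  fixes n :: nat and vs :: "(nat \<times> bool) list"
  assumes n: "n \<ge> 3" and ev: "even n"
    and dv: "distinct vs" and sv: "set vs = carrier (dihedral_group n)"
  shows "sombor_spectrum (carrier (dihedral_group n)) (osc_adj (dihedral_group n)) vs =
             replicate_mset (2 * n - 1) (- (2 * of_nat n - 1) * complex_of_real (sqrt 2))
           + replicate_mset 1 ((2 * of_nat n - 1) ^ 2 * complex_of_real (sqrt 2))"
proof -
  let ?V = "carrier (dihedral_group n)"
  let ?E = "osc_adj (dihedral_group n)"
  define r where "r = n - 2"
  define f where "f = n - 1"
  define ac where "ac x y = True" for x y :: nat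
  define dg where "dg x = 2 * n - 1" for x :: nat
  define w where "w x y = (if ac x y then complex_of_real (sqrt (real (dg x) ^ 2 + real (dg y) ^ 2)) else 0)" for x y :: nat
  define s where "s = complex_of_real (sqrt 2)"
  define c where "c = (2 * of_nat n - 1) * s"
  have adj: "?E (gv n i) (gv n j) \<longleftrightarrow> i \<noteq> j \<and> ac (cls (n - 2) i) (cls (n - 2) j)"
    if i: "i < 2 * n" and j: "j < 2 * n" for i j
  proof -
    have "?E (gv n i) (gv n j) \<longleftrightarrow> gv n i \<noteq> gv n j"
      by (rule osc_even[OF n ev gv_carrier[OF n i] gv_carrier[OF n j]])
    then show ?thesis using gv_inj[OF n i j] unfolding ac_def by auto
  qed
  have deg: "graph_deg ?V ?E (gv n i) = dg (cls (n - 2) i)" if i: "i < 2 * n" for i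
    using deg_even[OF n ev gv_carrier[OF n i]] unfolding dg_def by simp
  have S: "sombor_matrix ?V ?E (wsl n) = Sm r f w"
    unfolding r_def f_def w_def by (rule sombor_ws_gen[OF n adj deg])
  have cp: "char_poly (sombor_matrix ?V ?E vs) = char_poly (Bm r f w) * ([:w 1 1, 1:] ^ r * [:w 2 2, 1:] ^ f)"
    using sombor_perm[OF dv wsl_distinct[OF n], of ?V ?E] sv wsl_set[OF n] S char_poly_S by simp
  have rn: "real (2 * n - 1) = 2 * real n - 1" using n by auto
  have wc: "w x y = c" for x y
    unfolding w_def ac_def dg_def c_def s_def using n by (simp add: sqrt_sq2 sqrt_2sq rn)
  have nr: "(of_nat r :: complex) + of_nat f + 2 = 2 * of_nat n - 1"
    unfolding r_def f_def using n by (auto simp: of_nat_diff)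
  have BQ: "char_poly (Bm r f w) = [:c, 1:] ^ 2 * [:- (c * (2 * of_nat n - 1)), 1:]"
  proof (rule poly_eq_poly_eq_iff[THEN iffD1], rule ext)
    fix x
    show "poly (char_poly (Bm r f w)) x = poly ([:c, 1:] ^ 2 * [:- (c * (2 * of_nat n - 1)), 1:]) x"
      unfolding poly_char_poly_B_const[OF wc] nr by (simp add: algebra_simps)
  qed
  have CP: "char_poly (sombor_matrix ?V ?E vs) = [:c, 1:] ^ (2 * n - 1) * [:- (c * (2 * of_nat n - 1)), 1:]"
  proof -
    have "2 + (r + f) = 2 * n - 1" using n by (simp add: r_def f_def)
    then show ?thesis unfolding cp BQ wc by (simp add: power_add[symmetric] algebra_simps)
  qed
  then have "sombor_spectrum ?V ?E vs = replicate_mset (2 * n - 1) (- c) + {# c * (2 * of_nat n - 1) #}"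
  proof -
    have "proots ([:c, 1:] ^ (2 * n - 1) * [:- (c * (2 * of_nat n - 1)), 1:]) =
      proots ([:c, 1:] ^ (2 * n - 1)) + proots [:- (c * (2 * of_nat n - 1)), 1:]"
      by (rule proots_mult) simp_all
    also have "\<dots> = replicate_mset (2 * n - 1) (- c) + {# c * (2 * of_nat n - 1) #}"
      unfolding proots_power proots_linear_factor by simp
    finally show ?thesis unfolding sombor_spectrum_def CP .
  qed
  then show ?thesis unfolding c_def s_def by (simp add: power2_eq_square algebra_simps)
qed


theorem corollary4p4:
  fixes n :: nat and vs :: "(nat \<times> bool) list"
  assumes "n \<ge> 3"
    and "distinct vs" and "set vs = carrier (dihedral_group n)"
  shows "(odd n \<longrightarrow>
           sombor_spectrum (carrier (dihedral_group n)) (osc_adj (dihedral_group n)) vs =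
             replicate_mset (n - 2) (- (of_nat n - 1) * complex_of_real (sqrt 2))
           + replicate_mset (n - 1) (- of_nat n * complex_of_real (sqrt 2))
           + proots ([:0, 1:] * [:- (of_nat n - 1) * (of_nat n - 2) * complex_of_real (sqrt 2), 1:]
                              * [:- of_nat n * (of_nat n - 1) * complex_of_real (sqrt 2), 1:]
                     - smult ((of_nat n - 1) * (5 * of_nat n ^ 2 - 6 * of_nat n + 2))
                              [:- of_nat n * (of_nat n - 1) * complex_of_real (sqrt 2), 1:]
                     - smult (of_nat n * (5 * of_nat n ^ 2 - 4 * of_nat n + 1))
                              [:- (of_nat n - 1) * (of_nat n - 2) * complex_of_real (sqrt 2), 1:]))
        \<and> (even n \<longrightarrow>
           sombor_spectrum (carrier (dihedral_group n)) (osc_adj (dihedral_group n)) vs =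
             replicate_mset (2 * n - 1) (- (2 * of_nat n - 1) * complex_of_real (sqrt 2))
           + replicate_mset 1 ((2 * of_nat n - 1) ^ 2 * complex_of_real (sqrt 2)))"
    using odd_case[OF assms(1) _ assms(2) assms(3)] even_case[OF assms(1) _ assms(2) assms(3)] by blast

end
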